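(* If $X\subseteq \mathcal P(\omega)$ is an ultrafilter on $\omega$ (viewed as a subspace of $2^\omega$ via characteristic functions), then Alice has a winning strategy in the grouped Menger game played on $X$.
   Context: $\mathcal P(\omega)$ is identified with $2^\omega$ via characteristic functions, with the product topology. Grouped Menger game on $X\subseteq 2^\omega$: in each round $n\in\omega$ Alice selects a natural number $l_n>0$ and then the players play $l_n$ subrounds of the Menger game, indexed by $i\in[L_n,L_{n+1})$ where $L_0=0$, $L_{n+1}=l_0+\dots+l_n$: in subround $i$ Alice picks an open cover $\mathcal U_i$ of $X$ and Bob picks a finite $\mathcal F_i\subseteq\mathcal U_i$. Bob wins if $X=\bigcup_{n\in\omega}\bigcap_{i\in[L_n,L_{n+1})}\bigcup\mathcal F_i$; otherwise Alice wins. *)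

theory Defs
  imports "HOL-Analysis.Analysis"
begin

definition chi :: "nat set \<Rightarrow> (nat \<Rightarrow> bool)" where
  "chi A = (\<lambda>n. n \<in> A)"

definition cantor_top :: "(nat \<Rightarrow> bool) topology" where
  "cantor_top = product_topology (\<lambda>_. discrete_topology UNIV) UNIV"

definition open_in_sub :: "nat set set \<Rightarrow> nat set set \<Rightarrow> bool" where
  "open_in_sub X U \<longleftrightarrow> openin (subtopology cantor_top (chi ` X)) (chi ` U)"

definition open_cover :: "nat set set \<Rightarrow> nat set set set \<Rightarrow> bool" where
  "open_cover X \<U> \<longleftrightarrow> (\<forall>U\<in>\<U>. open_in_sub X U) \<and> \<Union>\<U> = X"

definition ultrafilter_on_nat :: "nat set set \<Rightarrow> bool" where
  "ultrafilter_on_nat X \<longleftrightarrow>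
     UNIV \<in> X \<and> {} \<notin> X \<and>
     (\<forall>A B. A \<in> X \<and> A \<subseteq> B \<longrightarrow> B \<in> X) \<and>
     (\<forall>A B. A \<in> X \<and> B \<in> X \<longrightarrow> A \<inter> B \<in> X) \<and>
     (\<forall>A. A \<in> X \<or> - A \<in> X)"

definition nonprincipal :: "nat set set \<Rightarrow> bool" where
  "nonprincipal X \<longleftrightarrow> (\<forall>A\<in>X. infinite A)"

text \<open>A strategy of Alice: a function choosing the group length l_n from Bob's
  previous moves, and a function choosing the cover U_i from Bob's previous moves
  F_0,...,F_(i-1).\<close>
type_synonym alice_strategy =
  "(nat set set set list \<Rightarrow> nat) \<times> (nat set set set list \<Rightarrow> nat set set set)"

definition legal_alice :: "nat set set \<Rightarrow> alice_strategy \<Rightarrow> bool" where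
  "legal_alice X \<sigma> \<longleftrightarrow> (\<forall>h. fst \<sigma> h > 0 \<and> open_cover X (snd \<sigma> h))"

fun group_bound :: "alice_strategy \<Rightarrow> (nat \<Rightarrow> nat set set set) \<Rightarrow> nat \<Rightarrow> nat" where
  "group_bound \<sigma> F 0 = 0"
| "group_bound \<sigma> F (Suc n) =
     group_bound \<sigma> F n + fst \<sigma> (map F [0..<group_bound \<sigma> F n])"

definition bob_play_legal :: "alice_strategy \<Rightarrow> (nat \<Rightarrow> nat set set set) \<Rightarrow> bool" where
  "bob_play_legal \<sigma> F \<longleftrightarrow>
     (\<forall>i. finite (F i) \<and> F i \<subseteq> snd \<sigma> (map F [0..<i]))"

definition bob_wins :: "nat set set \<Rightarrow> alice_strategy \<Rightarrow> (nat \<Rightarrow> nat set set set) \<Rightarrow> bool" where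
  "bob_wins X \<sigma> F \<longleftrightarrow>
     X = (\<Union>n. \<Inter>i\<in>{group_bound \<sigma> F n..<group_bound \<sigma> F (Suc n)}. \<Union>(F i))"

definition alice_wins_grouped_menger :: "nat set set \<Rightarrow> bool" where
  "alice_wins_grouped_menger X \<longleftrightarrow>
     (\<exists>\<sigma>. legal_alice X \<sigma> \<and> (\<forall>F. bob_play_legal \<sigma> F \<longrightarrow> \<not> bob_wins X \<sigma> F))"

end

theory Submission
  imports Defs
begin

definition UU :: "nat set set \<Rightarrow> nat \<Rightarrow> nat set set" where
  "UU X k = {A\<in>X. k \<in> A}"

definition bnd :: "nat set set \<Rightarrow> nat \<Rightarrow> nat set set set \<Rightarrow> nat" where
  "bnd X m F = Suc (max m (Max ((\<lambda>U. LEAST k. m \<le> k \<and> U = UU X k) ` F)))"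

definition mm :: "nat set set \<Rightarrow> nat set set set list \<Rightarrow> nat" where
  "mm X h = foldl (bnd X) 0 h"

definition cov :: "nat set set \<Rightarrow> nat \<Rightarrow> nat set set set" where
  "cov X m = UU X ` {m..}"

lemma bnd_gt: "m < bnd X m F"
  unfolding bnd_def by (simp add: le_imp_less_Suc)

lemma bnd_cover:
  assumes "finite F" "F \<subseteq> cov X m" "A \<in> \<Union>F"
  shows "\<exists>k. m \<le> k \<and> k < bnd X m F \<and> k \<in> A"
proof -
  obtain U where U: "U \<in> F" "A \<in> U" using assms(3) by blast
  then obtain k0 where k0: "m \<le> k0" "U = UU X k0" using assms(2) unfolding cov_def by auto
  define k where "k = (LEAST k. m \<le> k \<and> U = UU X k)"
  have kp: "m \<le> k \<and> U = UU X k" unfolding k_def by (rule LeastI[of _ k0]) (use k0 in auto)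
  have "k \<in> ((\<lambda>U. LEAST k. m \<le> k \<and> U = UU X k) ` F)" using U k_def by auto
  hence "k \<le> Max ((\<lambda>U. LEAST k. m \<le> k \<and> U = UU X k) ` F)"
    using assms(1) by (intro Max_ge) auto
  hence "k < bnd X m F" unfolding bnd_def by simp
  moreover have "k \<in> A" using kp U unfolding UU_def by auto
  ultimately show ?thesis using kp by blast
qed

lemma open_UU: "open_in_sub X (UU X k)"
proof -
  have top: "topspace cantor_top = UNIV" unfolding cantor_top_def by simp
  have cm: "continuous_map cantor_top (discrete_topology UNIV) (\<lambda>f. f k)"
    unfolding cantor_top_def by (rule continuous_map_product_projection) simp
  have "openin cantor_top {f \<in> topspace cantor_top. f k \<in> {True}}"
    by (rule openin_continuous_map_preimage[OF cm]) simp
  hence o: "openin cantor_top {f. f k}" using top by simp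
  have "chi ` UU X k = {f. f k} \<inter> chi ` X" unfolding UU_def chi_def by auto
  thus ?thesis unfolding open_in_sub_def openin_subtopology using o by blast
qed

lemma cov_open:
  assumes "nonprincipal X"
  shows "open_cover X (cov X m)"
  unfolding open_cover_def
proof
  show "\<forall>U\<in>cov X m. open_in_sub X U" unfolding cov_def using open_UU by auto
  show "\<Union> (cov X m) = X"
  proof
    show "\<Union> (cov X m) \<subseteq> X" unfolding cov_def UU_def by auto
    show "X \<subseteq> \<Union> (cov X m)"
    proof
      fix A assume A: "A \<in> X"
      hence "infinite A" using assms unfolding nonprincipal_def by auto
      then obtain k where "k \<in> A" "m \<le> k"
        by (metis finite_nat_set_iff_bounded_le linorder_not_less nless_le)
      thus "A \<in> \<Union> (cov X m)" unfolding cov_def UU_def using A by auto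
    qed
  qed
qed

lemma interval_exists:
  assumes "strict_mono (M::nat\<Rightarrow>nat)" "M 0 = 0"
  shows "\<exists>i. M i \<le> k \<and> k < M (Suc i)"
proof (induction k)
  case 0 thus ?case using assms by (metis le0 strict_monoD lessI)
next
  case (Suc k)
  then obtain i where i: "M i \<le> k" "k < M (Suc i)" by blast
  show ?case
  proof (cases "Suc k < M (Suc i)")
    case True thus ?thesis using i by (intro exI[of _ i]) auto
  next
    case False
    hence "M (Suc i) = Suc k" using i by auto
    moreover have "M (Suc i) < M (Suc (Suc i))" using assms(1) by (simp add: strict_monoD)
    ultimately show ?thesis by (intro exI[of _ "Suc i"]) auto
  qed
qed

lemma interval_unique:
  assumes "strict_mono (M::nat\<Rightarrow>nat)" "M i \<le> k" "k < M (Suc i)" "M j \<le> k" "k < M (Suc j)"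
  shows "i = j"
proof (rule ccontr)
  assume "i \<noteq> j"
  then consider "i < j" | "j < i" by linarith
  thus False
  proof cases
    case 1 hence "Suc i \<le> j" by simp
    hence "M (Suc i) \<le> M j" using assms(1) by (simp add: strict_mono_less_eq)
    thus False using assms by linarith
  next
    case 2 hence "Suc j \<le> i" by simp
    hence "M (Suc j) \<le> M i" using assms(1) by (simp add: strict_mono_less_eq)
    thus False using assms by linarith
  qed
qed

theorem mainTheorem5:
  fixes X :: "nat set set"
  assumes "ultrafilter_on_nat X" and "nonprincipal X"
  shows "alice_wins_grouped_menger X"
proof -
  define \<sigma> :: alice_strategy where "\<sigma> = (\<lambda>_. 2, \<lambda>h. cov X (mm X h))"
  have legal: "legal_alice X \<sigma>" unfolding legal_alice_def \<sigma>_def using cov_open[OF assms(2)] by simp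
  have "\<not> bob_wins X \<sigma> F" if bl: "bob_play_legal \<sigma> F" for F
  proof -
    define M where "M i = mm X (map F [0..<i])" for i
    have Msuc: "M (Suc i) = bnd X (M i) (F i)" for i unfolding M_def mm_def by simp
    have M0: "M 0 = 0" unfolding M_def mm_def by simp
    have sm: "strict_mono M" by (rule strict_monoI_Suc) (simp add: Msuc bnd_gt)
    have gb: "group_bound \<sigma> F n = 2*n" for n by (induction n) (auto simp: \<sigma>_def)
    have hit: "\<exists>k. M i \<le> k \<and> k < M (Suc i) \<and> k \<in> A" if "A \<in> \<Union>(F i)" for i A
    proof -
      have "finite (F i)" "F i \<subseteq> cov X (M i)"
        using bl unfolding bob_play_legal_def \<sigma>_def M_def by auto
      thus ?thesis using bnd_cover that Msuc by metis
    qed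
    define E where "E = {k. \<exists>i. even i \<and> M i \<le> k \<and> k < M (Suc i)}"
    have inE: "k \<in> E \<longleftrightarrow> even i" if "M i \<le> k" "k < M (Suc i)" for k i
      unfolding E_def using interval_unique[OF sm] that by blast
    obtain x where x: "x \<in> X" "x = E \<or> x = - E"
      using assms(1) unfolding ultrafilter_on_nat_def by blast
    have "x \<notin> (\<Union>n. \<Inter>i\<in>{group_bound \<sigma> F n..<group_bound \<sigma> F (Suc n)}. \<Union>(F i))"
    proof
      assume "x \<in> (\<Union>n. \<Inter>i\<in>{group_bound \<sigma> F n..<group_bound \<sigma> F (Suc n)}. \<Union>(F i))"
      then obtain n where n: "\<forall>i\<in>{2*n..<2*n+2}. x \<in> \<Union>(F i)" using gb by (simp add: \<sigma>_def) blast
      show False using x(2)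
      proof
        assume "x = E"
        then obtain k where "M (2*n+1) \<le> k" "k < M (Suc (2*n+1))" "k \<in> E"
          using hit[of x "2*n+1"] n by auto
        thus False using inE by fastforce
      next
        assume "x = - E"
        then obtain k where "M (2*n) \<le> k" "k < M (Suc (2*n))" "k \<notin> E"
          using hit[of x "2*n"] n by auto
        thus False using inE by fastforce
      qed
    qed
    thus ?thesis unfolding bob_wins_def using x(1) by blast
  qed
  thus ?thesis unfolding alice_wins_grouped_menger_def using legal by blast
qed

end
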